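(* Let $(X,\mathcal{A},\mu,T)$ be an ergodic probability preserving system, $(A_l)$ and $(A_l')$ two asymptotically rare sequences in $\mathcal{A}$, and $(\psi_{A_l})$, $(\psi'_{A_l'})$ two sequences of $\mathfrak{F}$-valued local observables for the sets $A_l$ and $A_l'$, respectively. Assume that $\mu(A_l\triangle A_l')=o(\mu(A_l))$ as $l\to\infty$, and that $d_{\mathfrak{F}}(\psi_{A_l},\psi'_{A_l'})\to0$ in $\mu_{A_l\cap A_l'}$-probability as $l\to\infty$. Then for any random sequence $\widetilde\Psi$ in $\mathfrak{F}$, $$\widetilde\Psi_{A_l}\overset{\mu_{A_l}}{\Longrightarrow}\widetilde\Psi\quad\text{iff}\quad\widetilde\Psi'_{A_l'}\overset{\mu_{A_l'}}{\Longrightarrow}\widetilde\Psi,$$ where $\widetilde\Psi_{A_l}$ and $\widetilde\Psi'_{A_l'}$ are the local processes given by $\psi_{A_l}$ and $\psi'_{A_l'}$, respectively.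
   Context: $(\mathfrak{F},d_{\mathfrak{F}})$ compact metric space; $T$ ergodic preserving the probability $\mu$. For $A$ with $\mu(A)>0$: $\varphi_A(x):=\inf\{n\ge1:T^nx\in A\}$, $T_Ax:=T^{\varphi_A(x)}x$, $\mu_A:=\mu(A\cap\cdot)/\mu(A)$. Asymptotically rare: $0<\mu(A_l)\to0$. Local observable: measurable $\psi_A:A\to\mathfrak{F}$, with $\widetilde\Psi_A:=(\psi_A,\psi_A\circ T_A,\psi_A\circ T_A^2,\ldots):A\to\mathfrak{F}^{\mathbb{N}_0}$ (product topology). $\overset{\nu}{\Longrightarrow}$: weak convergence of laws under $\nu$. *)

theory Defs
  imports "HOL-Probability.Probability"
begin

definition ergodic_pps :: "'a measure \<Rightarrow> ('a \<Rightarrow> 'a) \<Rightarrow> bool" where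
  "ergodic_pps M T \<longleftrightarrow>
     prob_space M \<and> T \<in> measurable M M \<and>
     (\<forall>E\<in>sets M. emeasure M (T -` E \<inter> space M) = emeasure M E) \<and>
     (\<forall>E\<in>sets M. T -` E \<inter> space M = E \<longrightarrow> measure M E = 0 \<or> measure M E = 1)"

text \<open>First return time to A (value 0 where x never enters A at times n >= 1;
  this is the null set where the paper's infimum is infinite).\<close>
definition return_time :: "('a \<Rightarrow> 'a) \<Rightarrow> 'a set \<Rightarrow> 'a \<Rightarrow> nat" where
  "return_time T A x =
     (if \<exists>n\<ge>1. (T ^^ n) x \<in> A then (LEAST n. n \<ge> 1 \<and> (T ^^ n) x \<in> A) else 0)"

definition induced_map :: "('a \<Rightarrow> 'a) \<Rightarrow> 'a set \<Rightarrow> 'a \<Rightarrow> 'a" where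
  "induced_map T A x = (T ^^ return_time T A x) x"

definition local_process ::
    "('a \<Rightarrow> 'a) \<Rightarrow> 'a set \<Rightarrow> ('a \<Rightarrow> 'f) \<Rightarrow> 'a \<Rightarrow> (nat \<Rightarrow> 'f)" where
  "local_process T A \<psi> x = (\<lambda>k. \<psi> ((induced_map T A ^^ k) x))"

definition cond_measure :: "'a measure \<Rightarrow> 'a set \<Rightarrow> 'a measure" where
  "cond_measure M A = uniform_measure (restrict_space M A) A"

definition weak_conv_to :: "(nat \<Rightarrow> 'b::topological_space measure) \<Rightarrow> 'b measure \<Rightarrow> bool" where
  "weak_conv_to Ps P \<longleftrightarrow>
     (\<forall>f :: 'b \<Rightarrow> real. continuous_on UNIV f \<and> bounded (range f) \<longrightarrow>
        (\<lambda>n. integral\<^sup>L (Ps n) f) \<longlonglongrightarrow> integral\<^sup>L P f)"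

definition local_law ::
    "'a measure \<Rightarrow> ('a \<Rightarrow> 'a) \<Rightarrow> 'a set \<Rightarrow> ('a \<Rightarrow> 'f::topological_space) \<Rightarrow> (nat \<Rightarrow> 'f) measure" where
  "local_law M T A \<psi> = distr (cond_measure M A) borel (local_process T A \<psi>)"

definition asymptotically_rare :: "'a measure \<Rightarrow> (nat \<Rightarrow> 'a set) \<Rightarrow> bool" where
  "asymptotically_rare M A \<longleftrightarrow>
     (\<forall>l. A l \<in> sets M \<and> measure M (A l) > 0) \<and> (\<lambda>l. measure M (A l)) \<longlonglongrightarrow> 0"

end

theory Submission
  imports Defs
begin


lemma compact_fun_UNIV:
  assumes "compact (UNIV :: 'f::metric_space set)"
  shows "compact (UNIV :: (nat \<Rightarrow> 'f) set)"
proof -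
  have "compact_space (euclidean :: 'f topology)"
    using assms by (simp add: compact_space_def compactin_euclidean_iff)
  then have "compact_space (product_topology (\<lambda>i::nat. euclidean :: 'f topology) UNIV)"
    by (simp add: compact_space_product_topology)
  then have "compact_space (euclidean :: (nat \<Rightarrow> 'f) topology)"
    by (simp add: euclidean_product_topology)
  then show ?thesis by (simp add: compact_space_def compactin_euclidean_iff)
qed

lemma meas_fun:
  fixes g :: "nat \<Rightarrow> 'a \<Rightarrow> 'f::metric_space"
  assumes cpt: "compact (UNIV :: 'f set)"
    and g: "\<And>k. g k \<in> borel_measurable N"
  shows "(\<lambda>x k. g k x) \<in> borel_measurable N"
proof (rule borel_measurableI)
  fix S :: "(nat \<Rightarrow> 'f) set" assume S: "open S"
  define f where "f = (\<lambda>x k. g k x)"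
  have cU: "compact (UNIV :: (nat \<Rightarrow> 'f) set)" using compact_fun_UNIV[OF cpt] .
  have "\<forall>n::nat. \<exists>C. finite C \<and> (UNIV :: (nat \<Rightarrow> 'f) set) \<subseteq> (\<Union>c\<in>C. ball c (1/(Suc n)))"
    using cU unfolding compact_eq_totally_bounded by auto
  then obtain C where C: "\<And>n. finite (C n)" "\<And>n. (UNIV :: (nat \<Rightarrow> 'f) set) \<subseteq> (\<Union>c\<in>C n. ball c (1/(Suc n)))"
    by metis
  define W where "W = (\<Union>n. \<Union>c\<in>{c\<in>C n. ball c (1/Suc n) \<subseteq> S}. ball c (1/Suc n))"
  have SW: "S = W"
  proof
    show "W \<subseteq> S" unfolding W_def by auto
    show "S \<subseteq> W"
    proof
      fix y assume "y \<in> S"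
      then obtain e where e: "e > 0" "ball y e \<subseteq> S" using S open_contains_ball by blast
      obtain n :: nat where n: "2 / Suc n < e"
      proof -
        obtain n :: nat where "inverse (real (Suc n)) < e / 2" using reals_Archimedean e by (metis half_gt_zero)
        then show ?thesis using that[of n] by (simp add: field_simps)
      qed
      obtain c where c: "c \<in> C n" "y \<in> ball c (1/Suc n)" using C(2)[of n] by blast
      have "ball c (1/Suc n) \<subseteq> ball y e"
      proof
        fix z assume "z \<in> ball c (1/Suc n)"
        then have "dist y z < 2 / Suc n" using c(2) dist_triangle[of y z c]
          by (simp add: dist_commute)
        then show "z \<in> ball y e" using n by simp
      qed
      then show "y \<in> W" unfolding W_def using c e by blast
    qed
  qed
  have mball: "f -` ball c r \<inter> space N \<in> sets N" for c r
  proof -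
    have cont: "continuous_on UNIV (\<lambda>y::'f. dist (c i) y)" for i
      by (intro continuous_intros)
    have "(\<lambda>x. (1/2)^n * min (dist (c (from_nat n)) (g (from_nat n) x)) 1) \<in> borel_measurable N" for n
      using measurable_compose[OF g borel_measurable_continuous_onI[OF cont]] by measurable
    then have "(\<lambda>x. dist c (f x)) \<in> borel_measurable N"
      unfolding f_def dist_fun_def by measurable
    then have "{x \<in> space N. dist c (f x) < r} \<in> sets N" by measurable
    moreover have "f -` ball c r \<inter> space N = {x \<in> space N. dist c (f x) < r}" by auto
    ultimately show ?thesis by simp
  qed
  have "f -` W \<inter> space N = (\<Union>n. \<Union>c\<in>{c\<in>C n. ball c (1/Suc n) \<subseteq> S}. f -` ball c (1/Suc n) \<inter> space N)"
    unfolding W_def by auto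
  also have "\<dots> \<in> sets N"
    using C(1) mball by (intro sets.countable_UN'') (auto intro: countable_finite)
  finally show "(\<lambda>x k. g k x) -` S \<inter> space N \<in> sets N" using SW f_def by simp
qed




locale mps =
  fixes M :: "'a measure" and T :: "'a \<Rightarrow> 'a"
  assumes ps: "prob_space M"
    and Tm: "T \<in> measurable M M"
    and Tinv: "\<And>E. E \<in> sets M \<Longrightarrow> emeasure M (T -` E \<inter> space M) = emeasure M E"
begin

lemma Tn_meas: "(T ^^ n) \<in> measurable M M"
  by (induction n) (simp_all add: measurable_ident measurable_compose[OF _ Tm])

lemma Tn_space: "x \<in> space M \<Longrightarrow> (T ^^ n) x \<in> space M"
  using measurable_space[OF Tn_meas] by blast

lemma Tn_inv: "E \<in> sets M \<Longrightarrow> emeasure M ((T ^^ n) -` E \<inter> space M) = emeasure M E"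
proof (induction n arbitrary: E)
  case 0 then show ?case using sets.sets_into_space by (simp add: Int_absorb2)
next
  case (Suc n)
  have eq: "(T ^^ Suc n) -` E \<inter> space M = T -` ((T ^^ n) -` E \<inter> space M) \<inter> space M"
    using measurable_space[OF Tm] by (auto simp: funpow_Suc_right simp del: funpow.simps)
  have m: "(T ^^ n) -` E \<inter> space M \<in> sets M" using Tn_meas Suc.prems by (rule measurable_sets)
  show ?case unfolding eq by (simp only: Tinv[OF m] Suc.IH[OF Suc.prems])
qed

lemma rt_meas: "U \<in> sets M \<Longrightarrow> return_time T U \<in> measurable M (count_space UNIV)"
proof -
  assume [measurable]: "U \<in> sets M"
  note Tn_meas[measurable]
  show ?thesis unfolding return_time_def by measurable
qed

lemma im_meas: "U \<in> sets M \<Longrightarrow> induced_map T U \<in> measurable M M"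
  unfolding induced_map_def
  by (rule measurable_compose_countable[OF Tn_meas rt_meas])

lemma im_in: "x \<in> U \<Longrightarrow> induced_map T U x \<in> U"
  unfolding induced_map_def return_time_def
  by (auto intro: LeastI2_ex)

lemma imk_in: "x \<in> U \<Longrightarrow> (induced_map T U ^^ k) x \<in> U"
  by (induction k) (auto intro: im_in)

lemma im_eq:
  assumes "A \<subseteq> U" "induced_map T U y \<in> A"
  shows "induced_map T A y = induced_map T U y"
proof (cases "\<exists>n\<ge>1. (T ^^ n) y \<in> U")
  case True
  define n where "n = (LEAST n. n \<ge> 1 \<and> (T ^^ n) y \<in> U)"
  have n1: "n \<ge> 1 \<and> (T ^^ n) y \<in> U" unfolding n_def using True by (auto intro: LeastI2_ex)
  have "induced_map T U y = (T ^^ n) y" unfolding induced_map_def return_time_def n_def using True by simp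
  then have nA: "(T ^^ n) y \<in> A" using assms by simp
  have "(LEAST m. m \<ge> 1 \<and> (T ^^ m) y \<in> A) = n"
  proof (rule Least_equality)
    show "1 \<le> n \<and> (T ^^ n) y \<in> A" using n1 nA by simp
    show "\<And>m. 1 \<le> m \<and> (T ^^ m) y \<in> A \<Longrightarrow> n \<le> m" unfolding n_def using assms(1)
      by (auto intro: Least_le)
  qed
  then show ?thesis using nA n1 True unfolding induced_map_def return_time_def n_def by auto
next
  case False
  then have "\<not> (\<exists>n\<ge>1. (T ^^ n) y \<in> A)" using assms(1) by auto
  then have "return_time T A y = 0" "return_time T U y = 0" using False unfolding return_time_def
    by (simp_all only: if_False)
  then show ?thesis unfolding induced_map_def by simp
qed

lemma im_inv2:
  assumes U: "U \<in> sets M" and E: "E \<in> sets M" "E \<subseteq> U"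
  shows "emeasure M (induced_map T U -` E \<inter> U) \<le> 2 * emeasure M E"
proof -
  have Us: "U \<subseteq> space M" using U sets.sets_into_space by auto
  define G where "G n = {x\<in>space M. x\<in>U \<and> (\<forall>j. 0<j \<and> j<n \<longrightarrow> (T^^j) x \<notin> U) \<and> (T^^n) x \<in> E \<and> 0 < n}" for n
  have Gm: "G n \<in> sets M" for n
  proof -
    note Tn_meas[measurable] U[measurable] E(1)[measurable]
    show ?thesis unfolding G_def by measurable
  qed
  have fin: "(\<Sum>n<N. emeasure M (G n)) \<le> emeasure M E" for N
  proof -
    define H where "H n = (T ^^ (N - n)) -` G n \<inter> space M" for n
    have Hm: "H n \<in> sets M" for n unfolding H_def using measurable_sets[OF Tn_meas Gm] .
    have "(\<Sum>n<N. emeasure M (G n)) = (\<Sum>n<N. emeasure M (H n))"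
      unfolding H_def using Tn_inv[OF Gm] by simp
    also have "\<dots> = emeasure M (\<Union>n<N. H n)"
    proof (rule sum_emeasure)
      show "H ` {..<N} \<subseteq> sets M" using Hm by auto
      show "finite {..<N}" by simp
      show "disjoint_family_on H {..<N}"
        unfolding disjoint_family_on_def
      proof (intro ballI impI)
        fix n m assume nm: "n \<in> {..<N}" "m \<in> {..<N}" "n \<noteq> m"
        have *: "H n \<inter> H m = {}" if "n < m" "m < N" for n m
        proof (rule ccontr)
          assume "H n \<inter> H m \<noteq> {}"
          then obtain x where x: "x \<in> H n" "x \<in> H m" by auto
          let ?y = "(T ^^ (N - m)) x"
          have "?y \<in> G m" using x(2) unfolding H_def by auto
          then have all: "\<forall>j. 0<j \<and> j<m \<longrightarrow> (T^^j) ?y \<notin> U" unfolding G_def by blast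
          have n0: "0 < n" using x(1) unfolding H_def G_def by auto
          have "(T ^^ (m - n)) ?y \<notin> U" using all[rule_format, of "m-n"] that n0 by auto
          moreover have "(T ^^ (m - n)) ?y = (T ^^ (N - n)) x"
            using that by (simp add: funpow_add[symmetric, THEN fun_cong, simplified])
          moreover have "(T ^^ (N - n)) x \<in> U" using x(1) unfolding H_def G_def by auto
          ultimately show False by simp
        qed
        show "H n \<inter> H m = {}"
          using nm *[of n m] *[of m n] by (cases "n < m") (auto simp: Int_commute)
      qed
    qed
    also have "\<dots> \<le> emeasure M ((T ^^ N) -` E \<inter> space M)"
    proof (rule emeasure_mono)
      show "(\<Union>n<N. H n) \<subseteq> (T ^^ N) -` E \<inter> space M"
      proof
        fix x assume "x \<in> (\<Union>n<N. H n)"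
        then obtain n where n: "n < N" "x \<in> H n" by auto
        then have "(T ^^ n) ((T ^^ (N - n)) x) \<in> E" unfolding H_def G_def by auto
        moreover have "(T ^^ n) ((T ^^ (N - n)) x) = (T ^^ N) x"
          using n(1) by (simp add: funpow_add[symmetric, THEN fun_cong, simplified])
        ultimately show "x \<in> (T ^^ N) -` E \<inter> space M" using n unfolding H_def by auto
      qed
      show "(T ^^ N) -` E \<inter> space M \<in> sets M" using measurable_sets[OF Tn_meas E(1)] .
    qed
    also have "\<dots> = emeasure M E" using Tn_inv[OF E(1)] .
    finally show ?thesis .
  qed
  have UG: "emeasure M (\<Union>n. G n) \<le> emeasure M E"
  proof -
    have "emeasure M (\<Union>n. G n) \<le> (\<Sum>n. emeasure M (G n))"
      using Gm by (intro emeasure_subadditive_countably) auto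
    also have "\<dots> \<le> emeasure M E"
      unfolding suminf_eq_SUP using fin by (auto intro: SUP_least)
    finally show ?thesis .
  qed
  have sub: "induced_map T U -` E \<inter> U \<subseteq> E \<union> (\<Union>n. G n)"
  proof
    fix x assume x: "x \<in> induced_map T U -` E \<inter> U"
    show "x \<in> E \<union> (\<Union>n. G n)"
    proof (cases "\<exists>n\<ge>1. (T ^^ n) x \<in> U")
      case False
      then have "return_time T U x = 0" unfolding return_time_def by (simp only: if_False)
      then show ?thesis using x unfolding induced_map_def by auto
    next
      case True
      define n where "n = (LEAST n. n \<ge> 1 \<and> (T ^^ n) x \<in> U)"
      have n1: "n \<ge> 1" unfolding n_def using True by (auto intro: LeastI2_ex)
      have nj: "(T^^j) x \<notin> U" if "0 < j" "j < n" for j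
        using not_less_Least[of j "\<lambda>n. n \<ge> 1 \<and> (T ^^ n) x \<in> U"] that unfolding n_def by auto
      have "induced_map T U x = (T ^^ n) x" unfolding induced_map_def return_time_def n_def using True by simp
      then have "x \<in> G n" using x n1 nj Us unfolding G_def by auto
      then show ?thesis by auto
    qed
  qed
  have "emeasure M (induced_map T U -` E \<inter> U) \<le> emeasure M (E \<union> (\<Union>n. G n))"
    using sub Gm E by (intro emeasure_mono) auto
  also have "\<dots> \<le> emeasure M E + emeasure M (\<Union>n. G n)"
    using Gm E by (intro emeasure_subadditive) auto
  also have "\<dots> \<le> emeasure M E + emeasure M E" using UG by (rule add_left_mono)
  also have "\<dots> = 2 * emeasure M E" by (simp add: mult_2)
  finally show ?thesis .
qed

lemma im_invk:
  assumes U: "U \<in> sets M" and E: "E \<in> sets M" "E \<subseteq> U"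
  shows "emeasure M ((induced_map T U ^^ k) -` E \<inter> U) \<le> 2 ^ k * emeasure M E"
  using E
proof (induction k arbitrary: E)
  case 0 then show ?case using U by (auto simp: Int_absorb2)
next
  case (Suc k)
  let ?E' = "(induced_map T U ^^ k) -` E \<inter> U"
  have Us: "U \<subseteq> space M" using U sets.sets_into_space by auto
  have mk: "(induced_map T U ^^ k) \<in> measurable M M"
    by (induction k) (simp_all add: measurable_ident measurable_compose[OF _ im_meas[OF U]])
  have E'm: "?E' \<in> sets M"
  proof -
    have "?E' = ((induced_map T U ^^ k) -` E \<inter> space M) \<inter> U" using Us by auto
    then show ?thesis using measurable_sets[OF mk Suc.prems(1)] U by auto
  qed
  have eq: "(induced_map T U ^^ Suc k) -` E \<inter> U = induced_map T U -` ?E' \<inter> U"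
    using im_in by (auto simp: funpow_Suc_right simp del: funpow.simps)
  have "emeasure M ((induced_map T U ^^ Suc k) -` E \<inter> U) \<le> 2 * emeasure M ?E'"
    unfolding eq by (rule im_inv2[OF U E'm]) auto
  also have "\<dots> \<le> 2 * (2 ^ k * emeasure M E)"
    using Suc.IH[OF Suc.prems] by (intro mult_left_mono) auto
  finally show ?case by (simp add: mult.assoc comp_def)
qed

end



lemma cond_integral:
  fixes g :: "'a \<Rightarrow> real"
  assumes fm: "finite_measure M" and A: "A \<in> sets M" and pos: "measure M A > 0"
    and g: "g \<in> borel_measurable (restrict_space M A)"
  shows "integral\<^sup>L (cond_measure M A) g = (\<integral>x. indicator A x * g x \<partial>M) / measure M A"
proof -
  let ?N = "restrict_space M A"
  have spN: "space ?N = A" using A sets.sets_into_space by (auto simp: space_restrict_space)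
  have eA: "emeasure ?N A = ennreal (measure M A)"
    using A by (simp add: emeasure_restrict_space finite_measure.emeasure_eq_measure[OF fm])
  have dens: "(\<lambda>x. indicator A x / emeasure ?N A) = (\<lambda>x. ennreal (indicator A x / measure M A))"
  proof (rule ext)
    fix x show "indicator A x / emeasure ?N A = ennreal (indicator A x / measure M A)"
      using pos divide_ennreal[of 1 "measure M A"] by (cases "x \<in> A") (auto simp: eA)
  qed
  have "integral\<^sup>L (cond_measure M A) g = integral\<^sup>L (density ?N (\<lambda>x. ennreal (indicator A x / measure M A))) g"
    unfolding cond_measure_def uniform_measure_def dens ..
  also have "\<dots> = integral\<^sup>L ?N (\<lambda>x. (indicator A x / measure M A) *\<^sub>R g x)"
  proof (rule integral_density[OF g])
    have "(\<lambda>x. indicator A x :: real) \<in> borel_measurable ?N"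
      using A by (intro borel_measurable_indicator') (auto simp: sets_restrict_space_iff space_restrict_space)
    then show "(\<lambda>x. indicator A x / measure M A) \<in> borel_measurable ?N" by measurable
    show "AE x in ?N. 0 \<le> indicator A x / measure M A" using pos by auto
  qed
  also have "\<dots> = (\<integral>x. indicator A x *\<^sub>R ((indicator A x / measure M A) *\<^sub>R g x) \<partial>M)"
    using A by (intro integral_restrict_space) (auto simp: Int_absorb2 sets.sets_into_space)
  also have "\<dots> = (\<integral>x. (indicator A x * g x) / measure M A \<partial>M)"
    by (intro Bochner_Integration.integral_cong) (auto simp: indicator_def)
  also have "\<dots> = (\<integral>x. indicator A x * g x \<partial>M) / measure M A"
    by simp
  finally show ?thesis .
qed

lemma cond_measure_meas:
  assumes fm: "finite_measure M" and A: "A \<in> sets M" and pos: "measure M A > 0"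
    and D: "D \<in> sets M" "D \<subseteq> A"
  shows "measure (cond_measure M A) D = measure M D / measure M A"
proof -
  let ?N = "restrict_space M A"
  have eA: "emeasure ?N A = ennreal (measure M A)"
    using A by (simp add: emeasure_restrict_space finite_measure.emeasure_eq_measure[OF fm])
  have DN: "D \<in> sets ?N" using D A by (auto simp: sets_restrict_space_iff)
  have "measure (cond_measure M A) D = measure ?N (A \<inter> D) / measure ?N A"
    unfolding cond_measure_def using eA pos DN by (intro measure_uniform_measure) auto
  also have "\<dots> = measure M D / measure M A"
    using D A by (simp add: measure_restrict_space Int_absorb1)
  finally show ?thesis .
qed




lemma fun_dist_small:
  assumes e: "(e::real) > 0"
  shows "\<exists>d>0. \<exists>K::nat. \<forall>y z :: nat \<Rightarrow> 'f::metric_space. (\<forall>k\<le>K. dist (y k) (z k) \<le> d) \<longrightarrow> dist y z < e"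
proof -
  obtain N where N: "(1/2::real)^N < e/2" using real_arch_pow_inv[of "e/2" "1/2"] e by auto
  define K where "K = Max ((from_nat :: nat \<Rightarrow> nat) ` {..N})"
  have K: "from_nat n \<le> K" if "n \<le> N" for n :: nat unfolding K_def using that by (intro Max_ge) auto
  show ?thesis
  proof (intro exI[of _ "e/8"] conjI exI[of _ K] allI impI)
    show "e/8 > 0" using e by simp
    fix y z :: "nat \<Rightarrow> 'f" assume yz: "\<forall>k\<le>K. dist (y k) (z k) \<le> e/8"
    have "{dist (y (from_nat n)) (z (from_nat n)) |n. n \<le> N} = (\<lambda>n. dist (y (from_nat n)) (z (from_nat n))) ` {..N}"
      by auto
    moreover have "\<forall>n\<in>{..N}. dist (y (from_nat n)) (z (from_nat n)) \<le> e/8" using yz K by auto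
    then have "Max ((\<lambda>n. dist (y (from_nat n)) (z (from_nat n))) ` {..N}) \<le> e/8"
      by (subst Max_le_iff) auto
    ultimately have "Max {dist (y (from_nat n)) (z (from_nat n)) |n. n \<le> N} \<le> e/8" by simp
    then have "dist y z \<le> 2 * (e/8) + (1/2)^N"
      using dist_fun_le_dist_first_terms[of y z N] by linarith
    then show "dist y z < e" using N e by linarith
  qed
qed

lemma unif_F:
  fixes F :: "(nat \<Rightarrow> 'f::metric_space) \<Rightarrow> real"
  assumes cpt: "compact (UNIV :: (nat \<Rightarrow> 'f) set)" and F: "continuous_on UNIV F" and e: "e > 0"
  shows "\<exists>d>0. \<exists>K::nat. \<forall>y z :: nat \<Rightarrow> 'f. (\<forall>k\<le>K. dist (y k) (z k) \<le> d) \<longrightarrow> \<bar>F y - F z\<bar> < e"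
proof -
  have "uniformly_continuous_on UNIV F" using compact_uniformly_continuous[OF F cpt] .
  then obtain d where d0: "d > 0" "\<forall>x\<in>UNIV. \<forall>x'\<in>UNIV. dist x' x < d \<longrightarrow> dist (F x') (F x) < e"
    unfolding uniformly_continuous_on_def using e by blast
  then have d: "d > 0" "\<And>x x'. dist x' x < d \<Longrightarrow> dist (F x') (F x) < e" by auto
  obtain d' K where dK: "d' > 0" "\<forall>y z :: nat \<Rightarrow> 'f. (\<forall>k\<le>K. dist (y k) (z k) \<le> d') \<longrightarrow> dist y z < d"
    using fun_dist_small[OF d(1)] by metis
  show ?thesis
  proof (intro exI[of _ d'] conjI exI[of _ K] allI impI)
    show "d' > 0" by fact
    fix y z :: "nat \<Rightarrow> 'f" assume "\<forall>k\<le>K. dist (y k) (z k) \<le> d'"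
    then have "dist y z < d" using dK by blast
    then have "dist (F y) (F z) < e" using d(2) by blast
    then show "\<bar>F y - F z\<bar> < e" by (simp add: dist_real_def)
  qed
qed




lemma alg:
  fixes X Y a a' rr bb sd :: real
  assumes "a > 0" "a' > 0" "\<bar>X - Y\<bar> \<le> rr" "\<bar>Y\<bar> \<le> bb * a'" "\<bar>a - a'\<bar> \<le> sd" "bb \<ge> 0"
  shows "\<bar>X/a - Y/a'\<bar> \<le> (rr + bb * sd)/a"
proof -
  have eq: "X/a - Y/a' = (X - Y)/a + Y*(a' - a)/(a*a')" using assms(1,2) by (simp add: field_simps)
  have "\<bar>Y*(a' - a)/(a*a')\<bar> = \<bar>Y\<bar> * \<bar>a' - a\<bar> / (a*a')" using assms(1,2) by (simp add: abs_mult)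
  also have "\<dots> \<le> (bb * a') * sd / (a*a')"
  proof -
    have h: "\<bar>a' - a\<bar> \<le> sd" using assms(5) by (simp add: abs_minus_commute)
    have "\<bar>Y\<bar> * \<bar>a' - a\<bar> \<le> (bb * a') * sd"
      using mult_mono'[OF assms(4) h] by auto
    moreover have "0 \<le> a * a'" using assms(1,2) by simp
    ultimately show ?thesis by (rule divide_right_mono)
  qed
  also have "\<dots> = bb * sd/a" using assms(1,2) by (simp add: field_simps)
  finally have q: "\<bar>Y*(a' - a)/(a*a')\<bar> \<le> bb * sd/a" .
  have p: "\<bar>(X - Y)/a\<bar> \<le> rr/a"
  proof -
    have "\<bar>(X - Y)/a\<bar> = \<bar>X - Y\<bar>/a" using assms(1) by simp
    also have "\<dots> \<le> rr/a" using assms(1,3) by (intro divide_right_mono) auto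
    finally show ?thesis .
  qed
  have "\<bar>X/a - Y/a'\<bar> \<le> \<bar>(X - Y)/a\<bar> + \<bar>Y*(a' - a)/(a*a')\<bar>"
    unfolding eq by (rule abs_triangle_ineq)
  also have "\<dots> \<le> rr/a + bb * sd/a" using p q by (rule add_mono)
  also have "\<dots> = (rr + bb * sd)/a" by (simp add: add_divide_distrib)
  finally show ?thesis .
qed

context mps begin

lemma lp_meas:
  assumes cpt: "compact (UNIV :: 'f::metric_space set)" and S: "S \<in> sets M"
    and phi: "(\<phi> :: 'a \<Rightarrow> 'f) \<in> borel_measurable (restrict_space M S)"
  shows "local_process T S \<phi> \<in> borel_measurable (restrict_space M S)"
proof -
  have mk: "(induced_map T S ^^ k) \<in> measurable M M" for k
    by (induction k) (simp_all add: measurable_ident measurable_compose[OF _ im_meas[OF S]])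
  have "(induced_map T S ^^ k) \<in> measurable (restrict_space M S) (restrict_space M S)" for k
    using imk_in by (intro measurable_restrict_space3[OF mk]) auto
  then have "(\<lambda>x. \<phi> ((induced_map T S ^^ k) x)) \<in> borel_measurable (restrict_space M S)" for k
    using measurable_compose phi by blast
  then show ?thesis unfolding local_process_def by (rule meas_fun[OF cpt])
qed

lemma law_int:
  fixes F :: "(nat \<Rightarrow> 'f::metric_space) \<Rightarrow> real"
  assumes cpt: "compact (UNIV :: 'f set)" and S: "S \<in> sets M" and pos: "measure M S > 0"
    and phi: "\<phi> \<in> borel_measurable (restrict_space M S)" and F: "continuous_on UNIV F"
  shows "integral\<^sup>L (local_law M T S \<phi>) F = (\<integral>x. indicator S x * F (local_process T S \<phi> x) \<partial>M) / measure M S"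
proof -
  interpret prob_space M by (rule ps)
  have ss: "sets (cond_measure M S) = sets (restrict_space M S)" by (simp add: cond_measure_def)
  have m: "local_process T S \<phi> \<in> measurable (cond_measure M S) borel"
    unfolding measurable_cong_sets[OF ss refl] by (rule lp_meas[OF cpt S phi])
  have Fm: "F \<in> borel_measurable borel" using F by (rule borel_measurable_continuous_onI)
  have "integral\<^sup>L (local_law M T S \<phi>) F = integral\<^sup>L (cond_measure M S) (\<lambda>x. F (local_process T S \<phi> x))"
    unfolding local_law_def by (rule integral_distr[OF m Fm])
  also have "\<dots> = (\<integral>x. indicator S x * F (local_process T S \<phi> x) \<partial>M) / measure M S"
    by (rule cond_integral[OF finite_measure_axioms S pos measurable_compose[OF lp_meas[OF cpt S phi] Fm]])
  finally show ?thesis .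
qed

lemma measure_invk:
  assumes U: "U \<in> sets M" and E: "E \<in> sets M" "E \<subseteq> U"
  shows "measure M ((induced_map T U ^^ k) -` E \<inter> U) \<le> 2 ^ k * measure M E"
proof -
  interpret prob_space M by (rule ps)
  have mk: "(induced_map T U ^^ k) \<in> measurable M M"
    by (induction k) (simp_all add: measurable_ident measurable_compose[OF _ im_meas[OF U]])
  have Us: "U \<subseteq> space M" using U sets.sets_into_space by auto
  have "(induced_map T U ^^ k) -` E \<inter> U = ((induced_map T U ^^ k) -` E \<inter> space M) \<inter> U" using Us by auto
  then have m: "(induced_map T U ^^ k) -` E \<inter> U \<in> sets M" using measurable_sets[OF mk E(1)] U by auto
  have "ennreal (measure M ((induced_map T U ^^ k) -` E \<inter> U)) \<le> 2 ^ k * ennreal (measure M E)"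
    using im_invk[OF U E, of k] m E by (simp add: emeasure_eq_measure)
  also have "\<dots> = ennreal (2 ^ k * measure M E)"
    using ennreal_power[of 2 k] ennreal_mult[of "2 ^ k" "measure M E"] by simp
  finally have le: "ennreal (measure M ((induced_map T U ^^ k) -` E \<inter> U)) \<le> ennreal (2 ^ k * measure M E)" .
  have "0 \<le> 2 ^ k * measure M E" by simp
  from ennreal_le_iff[OF this] le show ?thesis by blast
qed

end



lemma dist_set_meas:
  fixes \<phi> \<phi>' :: "'a \<Rightarrow> 'f::metric_space"
  assumes cpt: "compact (UNIV :: 'f set)" and S: "S \<in> sets N"
    and m1: "\<phi> \<in> borel_measurable (restrict_space N S)"
    and m2: "\<phi>' \<in> borel_measurable (restrict_space N S)"
  shows "{x \<in> S. dist (\<phi> x) (\<phi>' x) > \<eta>} \<in> sets N"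
proof -
  define g where "g k = (if k = (0::nat) then \<phi> else \<phi>')" for k
  have "g k \<in> borel_measurable (restrict_space N S)" for k using m1 m2 by (simp add: g_def)
  then have gm: "(\<lambda>x k. g k x) \<in> borel_measurable (restrict_space N S)" by (rule meas_fun[OF cpt])
  have c: "continuous_on UNIV (\<lambda>y::nat \<Rightarrow> 'f. dist (y 0) (y 1))"
    by (intro continuous_on_dist continuous_on_product_coordinates)
  have "(\<lambda>x. dist (g 0 x) (g 1 x)) \<in> borel_measurable (restrict_space N S)"
    using measurable_compose[OF gm borel_measurable_continuous_onI[OF c]] by simp
  then have dm: "(\<lambda>x. dist (\<phi> x) (\<phi>' x)) \<in> borel_measurable (restrict_space N S)" by (simp add: g_def)
  have "{x \<in> space (restrict_space N S). dist (\<phi> x) (\<phi>' x) > \<eta>} \<in> sets (restrict_space N S)"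
    using dm by measurable
  moreover have "space (restrict_space N S) = S" using S by simp
  ultimately have "{x \<in> S. dist (\<phi> x) (\<phi>' x) > \<eta>} \<in> sets (restrict_space N S)" by simp
  then show ?thesis using S by (simp add: sets_restrict_space_iff)
qed

context mps begin

lemma pre_meas:
  assumes U: "U \<in> sets M" and E: "E \<in> sets M"
  shows "(induced_map T U ^^ k) -` E \<inter> U \<in> sets M"
proof -
  have mk: "(induced_map T U ^^ k) \<in> measurable M M"
    by (induction k) (simp_all add: measurable_ident measurable_compose[OF _ im_meas[OF U]])
  have Us: "U \<subseteq> space M" using U sets.sets_into_space by auto
  have "(induced_map T U ^^ k) -` E \<inter> U = ((induced_map T U ^^ k) -` E \<inter> space M) \<inter> U" using Us by auto
  then show ?thesis using measurable_sets[OF mk E] U by auto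
qed

lemma good:
  assumes AU: "A \<subseteq> U" and h: "\<forall>j\<le>K. (induced_map T U ^^ j) x \<in> A"
  shows "k \<le> K \<Longrightarrow> (induced_map T A ^^ k) x = (induced_map T U ^^ k) x"
proof (induction k)
  case 0 then show ?case by simp
next
  case (Suc k)
  then have IH: "(induced_map T A ^^ k) x = (induced_map T U ^^ k) x" by simp
  have "induced_map T U ((induced_map T U ^^ k) x) \<in> A" using h[rule_format, OF Suc.prems] by simp
  then have "induced_map T A ((induced_map T U ^^ k) x) = induced_map T U ((induced_map T U ^^ k) x)"
    by (rule im_eq[OF AU])
  then show ?case using IH by simp
qed

end




lemma core:
  fixes M :: "'a measure" and T :: "'a \<Rightarrow> 'a"
    and A A' :: "nat \<Rightarrow> 'a set"
    and \<psi> \<psi>' :: "nat \<Rightarrow> 'a \<Rightarrow> 'f::metric_space"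
    and F :: "(nat \<Rightarrow> 'f) \<Rightarrow> real"
  assumes compactF: "compact (UNIV :: 'f set)"
    and erg: "ergodic_pps M T"
    and rareA: "asymptotically_rare M A"
    and rareA': "asymptotically_rare M A'"
    and obs: "\<And>l. \<psi> l \<in> borel_measurable (restrict_space M (A l))"
    and obs': "\<And>l. \<psi>' l \<in> borel_measurable (restrict_space M (A' l))"
    and symdiff: "(\<lambda>l. measure M ((A l - A' l) \<union> (A' l - A l)) / measure M (A l))
                    \<longlonglongrightarrow> 0"
    and inprob: "\<And>\<epsilon>. \<epsilon> > 0 \<Longrightarrow>
       (\<lambda>l. measure (cond_measure M (A l \<inter> A' l))
              {x \<in> A l \<inter> A' l. dist (\<psi> l x) (\<psi>' l x) > \<epsilon>}) \<longlonglongrightarrow> 0"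
    and Fc: "continuous_on UNIV F" and Fb: "bounded (range F)"
  shows "(\<lambda>l. integral\<^sup>L (local_law M T (A l) (\<psi> l)) F - integral\<^sup>L (local_law M T (A' l) (\<psi>' l)) F) \<longlonglongrightarrow> 0"
proof -
  have e1: "prob_space M" and e2: "T \<in> measurable M M"
    and e3: "\<And>E. E \<in> sets M \<Longrightarrow> emeasure M (T -` E \<inter> space M) = emeasure M E"
    using erg unfolding ergodic_pps_def by blast+
  interpret mps M T by (rule mps.intro[OF e1 e2 e3])
  interpret prob_space M by (rule ps)
  obtain B0 where B0: "\<And>y. norm (F y) \<le> B0" using Fb unfolding bounded_iff by auto
  define B where "B = max B0 0"
  have B: "\<And>y. \<bar>F y\<bar> \<le> B" "B \<ge> 0" using B0 unfolding B_def by (auto intro: le_max_iff_disj[THEN iffD2])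
  define a where "a l = measure M (A l)" for l
  define a' where "a' l = measure M (A' l)" for l
  define Sd where "Sd l = (A l - A' l) \<union> (A' l - A l)" for l
  define s where "s l = measure M (Sd l)" for l
  define U where "U l = A l \<union> A' l" for l
  have Am: "A l \<in> sets M" "A' l \<in> sets M" for l using rareA rareA' by (auto simp: asymptotically_rare_def)
  have apos: "a l > 0" "a' l > 0" for l using rareA rareA' by (auto simp: asymptotically_rare_def a_def a'_def)
  have Sdm: "Sd l \<in> sets M" for l unfolding Sd_def using Am by auto
  have Um: "U l \<in> sets M" for l unfolding U_def using Am by auto
  have Sd_U: "Sd l \<subseteq> U l" for l unfolding Sd_def U_def by auto
  have AU: "A l \<subseteq> U l" "A' l \<subseteq> U l" for l unfolding U_def by auto
  have ss: "(\<lambda>l. s l / a l) \<longlonglongrightarrow> 0" using symdiff by (simp add: s_def Sd_def a_def)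
  have aa': "\<bar>a l - a' l\<bar> \<le> s l" for l
  proof -
    have "a l \<le> a' l + measure M (A l - A' l)"
      unfolding a_def a'_def using Am measure_Un_le[of "A' l" M "A l - A' l"]
        finite_measure_mono[of "A l" "A' l \<union> (A l - A' l)"] by auto
    moreover have "a' l \<le> a l + measure M (A' l - A l)"
      unfolding a_def a'_def using Am measure_Un_le[of "A l" M "A' l - A l"]
        finite_measure_mono[of "A' l" "A l \<union> (A' l - A l)"] by auto
    moreover have "measure M (A l - A' l) \<le> s l" "measure M (A' l - A l) \<le> s l"
      unfolding s_def Sd_def using Am by (auto intro!: finite_measure_mono)
    ultimately show ?thesis by linarith
  qed
  define Phi where "Phi l x = F (local_process T (A l) (\<psi> l) x)" for l x
  define Phi' where "Phi' l x = F (local_process T (A' l) (\<psi>' l) x)" for l x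
  have I: "integral\<^sup>L (local_law M T (A l) (\<psi> l)) F = (\<integral>x. indicator (A l) x * Phi l x \<partial>M) / a l" for l
    unfolding Phi_def a_def by (rule law_int[OF compactF Am(1) apos(1)[unfolded a_def] obs Fc])
  have I': "integral\<^sup>L (local_law M T (A' l) (\<psi>' l)) F = (\<integral>x. indicator (A' l) x * Phi' l x \<partial>M) / a' l" for l
    unfolding Phi'_def a'_def by (rule law_int[OF compactF Am(2) apos(2)[unfolded a'_def] obs' Fc])
  have Fm: "F \<in> borel_measurable borel" using Fc by (rule borel_measurable_continuous_onI)
  have mPhi: "(\<lambda>x. indicator (A l) x * Phi l x) \<in> borel_measurable M" for l
  proof -
    have "Phi l \<in> borel_measurable (restrict_space M (A l))"
      unfolding Phi_def using measurable_compose[OF lp_meas[OF compactF Am(1) obs] Fm] .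
    then show ?thesis using Am(1) by (subst (asm) borel_measurable_restrict_space_iff) auto
  qed
  have mPhi': "(\<lambda>x. indicator (A' l) x * Phi' l x) \<in> borel_measurable M" for l
  proof -
    have "Phi' l \<in> borel_measurable (restrict_space M (A' l))"
      unfolding Phi'_def using measurable_compose[OF lp_meas[OF compactF Am(2) obs'] Fm] .
    then show ?thesis using Am(2) by (subst (asm) borel_measurable_restrict_space_iff) auto
  qed
  have bPhi: "\<bar>Phi l x\<bar> \<le> B" "\<bar>Phi' l x\<bar> \<le> B" for l x unfolding Phi_def Phi'_def using B by auto
  have iPhi: "integrable M (\<lambda>x. indicator (A l) x * Phi l x)" for l
    using mPhi bPhi B(2) by (intro integrable_const_bound[where B=B]) (auto simp: indicator_def)
  have iPhi': "integrable M (\<lambda>x. indicator (A' l) x * Phi' l x)" for l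
    using mPhi' bPhi B(2) by (intro integrable_const_bound[where B=B]) (auto simp: indicator_def)
  show ?thesis
  proof (rule LIMSEQ_I)
    fix r :: real assume r: "r > 0"
    define \<epsilon> where "\<epsilon> = r / 2"
    have e0: "\<epsilon> > 0" using r by (simp add: \<epsilon>_def)
    obtain \<eta> K where \<eta>: "\<eta> > 0" and K: "\<And>y z. (\<forall>k\<le>K. dist (y k) (z k) \<le> \<eta>) \<Longrightarrow> \<bar>F y - F z\<bar> < \<epsilon>"
      using unif_F[OF compact_fun_UNIV[OF compactF] Fc e0] by metis
    define D where "D l = {x \<in> A l \<inter> A' l. dist (\<psi> l x) (\<psi>' l x) > \<eta>}" for l
    define TU where "TU l = induced_map T (U l)" for l
    define bad where "bad l = (\<Union>j\<in>{..K}. (TU l ^^ j) -` (Sd l \<union> D l) \<inter> U l)" for l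
    define C where "C = real (Suc K) * 2 ^ K"
    have C0: "C \<ge> 0" unfolding C_def by simp
    have DA: "D l \<subseteq> A l \<inter> A' l" for l unfolding D_def by auto
    have Dm: "D l \<in> sets M" for l
      unfolding D_def using Am
      by (intro dist_set_meas[OF compactF]) (auto intro: measurable_restrict_mono[OF obs] measurable_restrict_mono[OF obs'])
    have SDm: "Sd l \<union> D l \<in> sets M" for l using Sdm Dm by auto
    have SD_U: "Sd l \<union> D l \<subseteq> U l" for l using Sd_U DA AU by blast
    have badm: "bad l \<in> sets M" for l
      unfolding bad_def TU_def apply (rule sets.finite_UN) apply simp by (rule pre_meas[OF Um SDm])
    have mbad: "measure M (bad l) \<le> C * (s l + measure M (D l))" for l
    proof -
      have "measure M (bad l) \<le> (\<Sum>j\<in>{..K}. measure M ((TU l ^^ j) -` (Sd l \<union> D l) \<inter> U l))"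
        unfolding bad_def TU_def using pre_meas[OF Um SDm] by (intro measure_UNION_le) auto
      also have "\<dots> \<le> (\<Sum>j\<in>{..K}. 2 ^ K * (s l + measure M (D l)))"
      proof (rule sum_mono)
        fix j assume j: "j \<in> {..K}"
        have "measure M ((TU l ^^ j) -` (Sd l \<union> D l) \<inter> U l) \<le> 2 ^ j * measure M (Sd l \<union> D l)"
          unfolding TU_def by (rule measure_invk[OF Um SDm SD_U])
        also have "\<dots> \<le> 2 ^ K * (s l + measure M (D l))"
        proof (rule mult_mono)
          show "(2::real) ^ j \<le> 2 ^ K" using j by (intro power_increasing) auto
          show "measure M (Sd l \<union> D l) \<le> s l + measure M (D l)"
            unfolding s_def using Sdm Dm by (rule measure_Un_le)
        qed auto
        finally show "measure M ((TU l ^^ j) -` (Sd l \<union> D l) \<inter> U l) \<le> 2 ^ K * (s l + measure M (D l))" .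
      qed
      also have "\<dots> = C * (s l + measure M (D l))" unfolding C_def by simp
      finally show ?thesis .
    qed
    have Dlim: "(\<lambda>l. measure M (D l) / a l) \<longlonglongrightarrow> 0"
    proof (rule tendsto_sandwich[OF _ _ tendsto_const inprob[OF \<eta>]])
      show "\<forall>\<^sub>F l in sequentially. 0 \<le> measure M (D l) / a l" by (rule always_eventually, rule allI, rule divide_nonneg_pos[OF measure_nonneg apos(1)])
      show "\<forall>\<^sub>F l in sequentially. measure M (D l) / a l \<le> measure (cond_measure M (A l \<inter> A' l)) {x \<in> A l \<inter> A' l. dist (\<psi> l x) (\<psi>' l x) > \<eta>}"
      proof (rule always_eventually, rule allI)
        fix l
        show "measure M (D l) / a l \<le> measure (cond_measure M (A l \<inter> A' l)) {x \<in> A l \<inter> A' l. dist (\<psi> l x) (\<psi>' l x) > \<eta>}"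
        proof (cases "measure M (A l \<inter> A' l) > 0")
          case True
          have "measure (cond_measure M (A l \<inter> A' l)) (D l) = measure M (D l) / measure M (A l \<inter> A' l)"
            using Am Dm DA True by (intro cond_measure_meas finite_measure_axioms) auto
          moreover have "measure M (D l) / a l \<le> measure M (D l) / measure M (A l \<inter> A' l)"
            using True apos Am unfolding a_def by (intro divide_left_mono finite_measure_mono) auto
          ultimately show ?thesis unfolding D_def by simp
        next
          case False
          then have "measure M (A l \<inter> A' l) = 0" using measure_nonneg[of M "A l \<inter> A' l"] by linarith
          then have "measure M (D l) = 0"
            using finite_measure_mono[OF DA] Am measure_nonneg[of M "D l"] by (smt (verit) sets.Int)
          then show ?thesis by simp
        qed
      qed
    qed
    define R where "R l = 2 * B * (1 + C) * (s l / a l) + 2 * B * C * (measure M (D l) / a l)" for l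
    have Rlim: "R \<longlonglongrightarrow> 0"
    proof -
      have "(\<lambda>l. 2 * B * (1 + C) * (s l / a l) + 2 * B * C * (measure M (D l) / a l)) \<longlonglongrightarrow> 2 * B * (1 + C) * 0 + 2 * B * C * 0"
        by (intro tendsto_intros ss Dlim)
      then show ?thesis unfolding R_def by simp
    qed
    have pt: "\<bar>indicator (A l) x * Phi l x - indicator (A' l) x * Phi' l x\<bar>
        \<le> B * indicator (Sd l) x + \<epsilon> * indicator (A l) x + 2 * B * indicator (bad l) x"
      if x: "x \<in> space M" for l x
    proof -
      have nn: "0 \<le> B * indicator (Sd l) x" "0 \<le> \<epsilon> * indicator (A l) x" "0 \<le> 2 * B * indicator (bad l) x"
        using B(2) e0 by auto
      consider (both) "x \<in> A l" "x \<in> A' l" | (onlyA) "x \<in> A l" "x \<notin> A' l" | (onlyA') "x \<notin> A l" "x \<in> A' l"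
        | (none) "x \<notin> A l" "x \<notin> A' l" by blast
      then show ?thesis
      proof cases
        case both
        have nS: "indicator (Sd l) x = (0::real)" using both by (simp add: Sd_def)
        show ?thesis
        proof (cases "x \<in> bad l")
          case True
          have "\<bar>Phi l x - Phi' l x\<bar> \<le> 2 * B" using bPhi[of l x] bPhi[of l x] by (simp add: abs_diff_le_iff) (smt (verit) bPhi)
          then show ?thesis using both True nn nS by simp
        next
          case False
          have xU: "x \<in> U l" using both unfolding U_def by auto
          have inAA: "(TU l ^^ j) x \<in> A l \<inter> A' l" and notD: "(TU l ^^ j) x \<notin> D l" if j: "j \<le> K" for j
          proof -
            have "(TU l ^^ j) x \<in> U l" unfolding TU_def using imk_in[OF xU] .
            moreover have "(TU l ^^ j) x \<notin> Sd l \<union> D l" using False xU j unfolding bad_def by auto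
            ultimately show "(TU l ^^ j) x \<in> A l \<inter> A' l" "(TU l ^^ j) x \<notin> D l"
              unfolding U_def Sd_def by auto
          qed
          have hA: "\<forall>j\<le>K. (induced_map T (U l) ^^ j) x \<in> A l" using inAA unfolding TU_def by blast
          have hA': "\<forall>j\<le>K. (induced_map T (U l) ^^ j) x \<in> A' l" using inAA unfolding TU_def by blast
          have eqA: "(induced_map T (A l) ^^ k) x = (TU l ^^ k) x" if "k \<le> K" for k
            unfolding TU_def by (rule good[OF AU(1) hA that])
          have eqA': "(induced_map T (A' l) ^^ k) x = (TU l ^^ k) x" if "k \<le> K" for k
            unfolding TU_def by (rule good[OF AU(2) hA' that])
          have "\<forall>k\<le>K. dist (local_process T (A l) (\<psi> l) x k) (local_process T (A' l) (\<psi>' l) x k) \<le> \<eta>"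
          proof (intro allI impI)
            fix k assume k: "k \<le> K"
            have "\<not> dist (\<psi> l ((TU l ^^ k) x)) (\<psi>' l ((TU l ^^ k) x)) > \<eta>"
              using inAA[OF k] notD[OF k] unfolding D_def by auto
            then show "dist (local_process T (A l) (\<psi> l) x k) (local_process T (A' l) (\<psi>' l) x k) \<le> \<eta>"
              unfolding local_process_def using eqA[OF k] eqA'[OF k] by simp
          qed
          then have "\<bar>Phi l x - Phi' l x\<bar> < \<epsilon>" unfolding Phi_def Phi'_def by (rule K)
          then show ?thesis using both False nn nS by simp
        qed
      next
        case onlyA
        then have "x \<in> Sd l" unfolding Sd_def by auto
        then have "B * indicator (Sd l) x = B" by simp
        moreover have "\<bar>indicator (A l) x * Phi l x - indicator (A' l) x * Phi' l x\<bar> = \<bar>Phi l x\<bar>"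
          using onlyA by simp
        ultimately show ?thesis using nn bPhi[of l x] by linarith
      next
        case onlyA'
        then have "x \<in> Sd l" unfolding Sd_def by auto
        then have "B * indicator (Sd l) x = B" by simp
        moreover have "\<bar>indicator (A l) x * Phi l x - indicator (A' l) x * Phi' l x\<bar> = \<bar>Phi' l x\<bar>"
          using onlyA' by simp
        ultimately show ?thesis using nn bPhi[of l x] by linarith
      next
        case none
        then have "\<bar>indicator (A l) x * Phi l x - indicator (A' l) x * Phi' l x\<bar> = 0" by simp
        then show ?thesis using nn by linarith
      qed
    qed
    have est: "\<bar>integral\<^sup>L (local_law M T (A l) (\<psi> l)) F - integral\<^sup>L (local_law M T (A' l) (\<psi>' l)) F\<bar> \<le> \<epsilon> + R l" for l
    proof -
      define X where "X = (\<integral>x. indicator (A l) x * Phi l x \<partial>M)"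
      define Y where "Y = (\<integral>x. indicator (A' l) x * Phi' l x \<partial>M)"
      define g where "g x = B * indicator (Sd l) x + \<epsilon> * indicator (A l) x + 2 * B * indicator (bad l) x" for x
      have ii: "integrable M (indicator S :: 'a \<Rightarrow> real)" if "S \<in> sets M" for S
        by (rule integrable_real_indicator[OF that]) (simp add: less_top[symmetric])
      have ig: "integrable M g" unfolding g_def
        by (intro Bochner_Integration.integrable_add integrable_mult_right ii Sdm Am badm)
      have intg: "integral\<^sup>L M g = B * s l + \<epsilon> * a l + 2 * B * measure M (bad l)"
        unfolding g_def s_def a_def using Sdm Am badm
        by (simp add: Bochner_Integration.integral_add integrable_mult_right ii)
      have ih: "integrable M (\<lambda>x. indicator (A l) x * Phi l x - indicator (A' l) x * Phi' l x)"
        using iPhi iPhi' by auto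
      have XY: "X - Y = (\<integral>x. indicator (A l) x * Phi l x - indicator (A' l) x * Phi' l x \<partial>M)"
        unfolding X_def Y_def using iPhi iPhi' by (simp add: Bochner_Integration.integral_diff)
      have "\<bar>X - Y\<bar> \<le> integral\<^sup>L M g"
      proof -
        have "(\<integral>x. indicator (A l) x * Phi l x - indicator (A' l) x * Phi' l x \<partial>M) \<le> integral\<^sup>L M g"
        proof (rule integral_mono[OF ih ig])
          fix x assume x: "x \<in> space M"
          show "indicator (A l) x * Phi l x - indicator (A' l) x * Phi' l x \<le> g x"
            using pt[OF x, of l] unfolding g_def by (simp add: abs_le_iff)
        qed
        moreover have "(\<integral>x. - (indicator (A l) x * Phi l x - indicator (A' l) x * Phi' l x) \<partial>M) \<le> integral\<^sup>L M g"
        proof (rule integral_mono[OF integrable_minus[OF ih] ig])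
          fix x assume x: "x \<in> space M"
          show "- (indicator (A l) x * Phi l x - indicator (A' l) x * Phi' l x) \<le> g x"
            using pt[OF x, of l] unfolding g_def by (simp add: abs_le_iff)
        qed
        moreover have "(\<integral>x. - (indicator (A l) x * Phi l x - indicator (A' l) x * Phi' l x) \<partial>M)
            = - (\<integral>x. indicator (A l) x * Phi l x - indicator (A' l) x * Phi' l x \<partial>M)"
          by (rule Bochner_Integration.integral_minus)
        ultimately show ?thesis unfolding XY abs_le_iff by linarith
      qed
      then have XYb: "\<bar>X - Y\<bar> \<le> B * s l + \<epsilon> * a l + 2 * B * measure M (bad l)" using intg by simp
      have Yb: "\<bar>Y\<bar> \<le> B * a' l"
      proof -
        have i2: "integrable M (\<lambda>x. B * indicator (A' l) x)" by (intro integrable_mult_right ii Am(2))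
        have pb: "\<bar>indicator (A' l) x * Phi' l x\<bar> \<le> B * indicator (A' l) x" for x
          using bPhi[of l x] by (auto simp: indicator_def abs_mult)
        have "Y \<le> (\<integral>x. B * indicator (A' l) x \<partial>M)"
          unfolding Y_def using pb by (intro integral_mono[OF iPhi' i2]) (simp add: abs_le_iff)
        moreover have "- Y \<le> (\<integral>x. B * indicator (A' l) x \<partial>M)"
        proof -
          have "(\<integral>x. - (indicator (A' l) x * Phi' l x) \<partial>M) \<le> (\<integral>x. B * indicator (A' l) x \<partial>M)"
            using pb by (intro integral_mono[OF integrable_minus[OF iPhi'] i2]) (simp add: abs_le_iff)
          then show ?thesis unfolding Y_def by simp
        qed
        moreover have "(\<integral>x. B * indicator (A' l) x \<partial>M) = B * a' l"
        proof -
          have "A' l \<inter> space M = A' l" using Am(2)[of l] sets.sets_into_space by blast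
          then show ?thesis unfolding a'_def by simp
        qed
        ultimately show ?thesis unfolding abs_le_iff by linarith
      qed
      have "\<bar>X / a l - Y / a' l\<bar> \<le> ((B * s l + \<epsilon> * a l + 2 * B * measure M (bad l)) + B * s l) / a l"
        by (rule alg[OF apos(1) apos(2) XYb Yb aa' B(2)])
      also have "\<dots> = \<epsilon> + (2 * B * s l + 2 * B * measure M (bad l)) / a l"
        using apos(1)[of l] by (simp add: field_simps)
      also have "\<dots> \<le> \<epsilon> + (2 * B * s l + 2 * B * (C * (s l + measure M (D l)))) / a l"
        using mbad[of l] B(2) apos(1)[of l] by (intro add_left_mono divide_right_mono add_left_mono mult_left_mono) auto
      also have "\<dots> = \<epsilon> + R l" unfolding R_def using apos(1)[of l] by (simp add: field_simps)
      finally show ?thesis unfolding I I' X_def Y_def .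
    qed
    obtain N where N: "\<And>l. l \<ge> N \<Longrightarrow> \<bar>R l\<bar> < \<epsilon>"
      using Rlim e0 unfolding LIMSEQ_def dist_real_def by auto
    show "\<exists>no. \<forall>n\<ge>no. norm (integral\<^sup>L (local_law M T (A n) (\<psi> n)) F - integral\<^sup>L (local_law M T (A' n) (\<psi>' n)) F - 0) < r"
    proof (intro exI allI impI)
      fix n assume "n \<ge> N"
      then have "\<bar>R n\<bar> < \<epsilon>" by (rule N)
      then show "norm (integral\<^sup>L (local_law M T (A n) (\<psi> n)) F - integral\<^sup>L (local_law M T (A' n) (\<psi>' n)) F - 0) < r"
        using est[of n] unfolding \<epsilon>_def by simp
    qed
  qed
qed


theorem mainTheorem7:
  fixes M :: "'a measure" and T :: "'a \<Rightarrow> 'a"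
    and A A' :: "nat \<Rightarrow> 'a set"
    and \<psi> \<psi>' :: "nat \<Rightarrow> 'a \<Rightarrow> 'f::metric_space"
    and P :: "(nat \<Rightarrow> 'f) measure"
  assumes compactF: "compact (UNIV :: 'f set)"
    and erg: "ergodic_pps M T"
    and rareA: "asymptotically_rare M A"
    and rareA': "asymptotically_rare M A'"
    and obs: "\<And>l. \<psi> l \<in> borel_measurable (restrict_space M (A l))"
    and obs': "\<And>l. \<psi>' l \<in> borel_measurable (restrict_space M (A' l))"
    and symdiff: "(\<lambda>l. measure M ((A l - A' l) \<union> (A' l - A l)) / measure M (A l))
                    \<longlonglongrightarrow> 0"
    and inprob: "\<And>\<epsilon>. \<epsilon> > 0 \<Longrightarrow>
       (\<lambda>l. measure (cond_measure M (A l \<inter> A' l))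
              {x \<in> A l \<inter> A' l. dist (\<psi> l x) (\<psi>' l x) > \<epsilon>}) \<longlonglongrightarrow> 0"
    and P_prob: "prob_space P" and P_sets: "sets P = sets borel"
  shows "weak_conv_to (\<lambda>l. local_law M T (A l) (\<psi> l)) P \<longleftrightarrow>
         weak_conv_to (\<lambda>l. local_law M T (A' l) (\<psi>' l)) P"
proof -
  have core_app: "(\<lambda>l. integral\<^sup>L (local_law M T (A l) (\<psi> l)) f - integral\<^sup>L (local_law M T (A' l) (\<psi>' l)) f) \<longlonglongrightarrow> 0"
    if "continuous_on UNIV f" "bounded (range f)" for f :: "(nat \<Rightarrow> 'f) \<Rightarrow> real"
    by (rule core[OF compactF erg rareA rareA' obs obs' symdiff inprob that])
  show ?thesis
    unfolding weak_conv_to_def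
  proof (intro iffI allI impI)
    fix f :: "(nat \<Rightarrow> 'f) \<Rightarrow> real"
    assume h: "\<forall>f :: (nat \<Rightarrow> 'f) \<Rightarrow> real. continuous_on UNIV f \<and> bounded (range f) \<longrightarrow>
        (\<lambda>n. integral\<^sup>L (local_law M T (A n) (\<psi> n)) f) \<longlonglongrightarrow> integral\<^sup>L P f"
      and f: "continuous_on UNIV f \<and> bounded (range f)"
    have "(\<lambda>n. integral\<^sup>L (local_law M T (A n) (\<psi> n)) f
        - (integral\<^sup>L (local_law M T (A n) (\<psi> n)) f - integral\<^sup>L (local_law M T (A' n) (\<psi>' n)) f))
        \<longlonglongrightarrow> integral\<^sup>L P f - 0"
    proof (rule tendsto_diff)
      show "(\<lambda>n. integral\<^sup>L (local_law M T (A n) (\<psi> n)) f) \<longlonglongrightarrow> integral\<^sup>L P f" using mp[OF spec[OF h, of f] f] .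
      show "(\<lambda>n. integral\<^sup>L (local_law M T (A n) (\<psi> n)) f - integral\<^sup>L (local_law M T (A' n) (\<psi>' n)) f) \<longlonglongrightarrow> 0"
        using core_app f by simp
    qed
    then show "(\<lambda>n. integral\<^sup>L (local_law M T (A' n) (\<psi>' n)) f) \<longlonglongrightarrow> integral\<^sup>L P f" by simp
  next
    fix f :: "(nat \<Rightarrow> 'f) \<Rightarrow> real"
    assume h: "\<forall>f :: (nat \<Rightarrow> 'f) \<Rightarrow> real. continuous_on UNIV f \<and> bounded (range f) \<longrightarrow>
        (\<lambda>n. integral\<^sup>L (local_law M T (A' n) (\<psi>' n)) f) \<longlonglongrightarrow> integral\<^sup>L P f"
      and f: "continuous_on UNIV f \<and> bounded (range f)"
    have "(\<lambda>n. integral\<^sup>L (local_law M T (A' n) (\<psi>' n)) f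
        + (integral\<^sup>L (local_law M T (A n) (\<psi> n)) f - integral\<^sup>L (local_law M T (A' n) (\<psi>' n)) f))
        \<longlonglongrightarrow> integral\<^sup>L P f + 0"
    proof (rule tendsto_add)
      show "(\<lambda>n. integral\<^sup>L (local_law M T (A' n) (\<psi>' n)) f) \<longlonglongrightarrow> integral\<^sup>L P f" using mp[OF spec[OF h, of f] f] .
      show "(\<lambda>n. integral\<^sup>L (local_law M T (A n) (\<psi> n)) f - integral\<^sup>L (local_law M T (A' n) (\<psi>' n)) f) \<longlonglongrightarrow> 0"
        using core_app f by simp
    qed
    then show "(\<lambda>n. integral\<^sup>L (local_law M T (A n) (\<psi> n)) f) \<longlonglongrightarrow> integral\<^sup>L P f" by simp
  qed
qed

end
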